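(* Let $k$ be a field with $1/2\in k$, $R$ the local ring of ${\mathbb A}^1_k=\mathrm{Spec}\,k[t]$ at $t=0$, and $\mathfrak m=tR$. There is a well-defined group homomorphism $$\rho:K_2(R,\mathfrak m^2)\to \mathfrak m^2\Omega^1_{R/k}/\mathfrak m^3\Omega^1_{R/k}$$ determined on generators by $\rho\langle a,b\rangle=-a\,db$ if $a\in\mathfrak m^2$, $b\in R$, and $\rho\langle a,b\rangle=b\,da$ if $b\in\mathfrak m^2$, $a\in R$. Moreover $\rho$ is nonzero; e.g. $\rho\langle t^2,t\rangle=-t^2dt\neq 0$.
   Context: $\Omega^1_{R/k}$ is the module of K\"ahler differentials of $R$ over $k$; the target $\mathfrak m^2\Omega^1_{R/k}/\mathfrak m^3\Omega^1_{R/k}$ is a one-dimensional $k$-vector space with basis the class of $t^2dt$ (the paper identifies it with $\mathfrak m^3/\mathfrak m^4$). $K_2(R,\mathfrak m^2)$ is relative $K_2$; for $(a,b)\in(R\times\mathfrak m^2)\cup(\mathfrak m^2\times R)$, $\langle a,b\rangle$ is the Dennis–Stein (pointy bracket) symbol. $K_2(R,\mathfrak m^2)$ has the presentation: generators $\langle a,b\rangle$ for such pairs, relations $\langle a,b\rangle=-\langle b,a\rangle$ ($a\in\mathfrak m^2$); $\langle a,b\rangle+\langle a,c\rangle=\langle a,b+c-abc\rangle$ ($a\in\mathfrak m^2$, or $b,c\in\mathfrak m^2$); $\langle a,bc\rangle=\langle ab,c\rangle+\langle ac,b\rangle$ ($a\in\mathfrak m^2$). *)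

theory Defs
  imports "HOL-Algebra.Free_Abelian_Groups" "HOL-Algebra.Generated_Groups" "HOL-Algebra.Coset"
    "HOL-Computational_Algebra.Polynomial_FPS"
begin

text \<open>The local ring R of the affine line at t = 0, realised inside k[[t]]
  (its completion, into which it embeds): elements p/q with q(0) nonzero.\<close>
definition Rloc :: "'k::field fps set" where
  "Rloc = {fps_of_poly p * inverse (fps_of_poly q) | p q. poly q 0 \<noteq> 0}"

definition mpow :: "nat \<Rightarrow> 'k::field fps set" where
  "mpow n = {fps_X ^ n * r | r. r \<in> Rloc}"

text \<open>Kaehler differentials: Omega^1_{R/k} = R dt, a differential x dt being
  represented by its coefficient x; the differential is d b = b' dt.\<close>
definition dR :: "'k::field fps \<Rightarrow> 'k fps" where
  "dR b = fps_deriv b"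

definition OmG :: "'k::field fps monoid" where
  "OmG = \<lparr>carrier = mpow 2, monoid.mult = (+), one = 0\<rparr>"

definition OmQ :: "'k::field fps set monoid" where
  "OmQ = OmG Mod mpow 3"

definition omcls :: "'k::field fps \<Rightarrow> 'k fps set" where
  "omcls x = mpow 3 #>\<^bsub>OmG\<^esub> x"

definition DSgens :: "('k::field fps \<times> 'k fps) set" where
  "DSgens = {(a, b). (a \<in> Rloc \<and> b \<in> mpow 2) \<or> (a \<in> mpow 2 \<and> b \<in> Rloc)}"

definition FK :: "('k::field fps \<times> 'k fps \<Rightarrow>\<^sub>0 int) monoid" where
  "FK = free_Abelian_group DSgens"

definition DSrels :: "('k::field fps \<times> 'k fps \<Rightarrow>\<^sub>0 int) set" where
  "DSrels =
     {frag_of (a, b) + frag_of (b, a) | a b. a \<in> mpow 2 \<and> b \<in> Rloc}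
   \<union> {frag_of (a, b) + frag_of (a, c) - frag_of (a, b + c - a * b * c) | a b c.
        (a \<in> mpow 2 \<and> b \<in> Rloc \<and> c \<in> Rloc) \<or> (a \<in> Rloc \<and> b \<in> mpow 2 \<and> c \<in> mpow 2)}
   \<union> {frag_of (a, b * c) - frag_of (a * b, c) - frag_of (a * c, b) | a b c.
        a \<in> mpow 2 \<and> b \<in> Rloc \<and> c \<in> Rloc}"

definition K2rel :: "('k::field fps \<times> 'k fps \<Rightarrow>\<^sub>0 int) set monoid" where
  "K2rel = FK Mod generate FK DSrels"

definition DS :: "'k::field fps \<Rightarrow> 'k fps \<Rightarrow> ('k fps \<times> 'k fps \<Rightarrow>\<^sub>0 int) set" where
  "DS a b = generate FK DSrels #>\<^bsub>FK\<^esub> frag_of (a, b)"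

end

theory Submission
  imports Defs
begin
unbundle fps_syntax

lemma inRloc: "poly q 0 \<noteq> 0 \<Longrightarrow> fps_of_poly p * inverse (fps_of_poly q) \<in> Rloc"
  unfolding Rloc_def by blast

lemma Rloc_E: assumes "x \<in> Rloc" obtains p q where "poly q 0 \<noteq> 0" "x = fps_of_poly p * inverse (fps_of_poly (q::'k::field poly))"
  using assms unfolding Rloc_def by blast

lemma fq0: "poly q 0 \<noteq> 0 \<Longrightarrow> fps_of_poly q $ 0 \<noteq> 0"
  by (simp add: poly_0_coeff_0)

lemma poly_in_Rloc: "fps_of_poly p \<in> (Rloc :: 'k::field fps set)"
  using inRloc[of "1::'k poly" p] by simp

lemma inv_in_Rloc: "poly q 0 \<noteq> 0 \<Longrightarrow> inverse (fps_of_poly q) \<in> (Rloc :: 'k::field fps set)"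
  using inRloc[of q 1] by simp

lemma Rloc_mult: assumes "x \<in> Rloc" "y \<in> Rloc" shows "x * y \<in> (Rloc :: 'k::field fps set)"
proof -
  obtain p q where a: "poly q 0 \<noteq> 0" "x = fps_of_poly p * inverse (fps_of_poly q)" using assms(1) by (rule Rloc_E)
  obtain p' q' where b: "poly q' 0 \<noteq> 0" "y = fps_of_poly p' * inverse (fps_of_poly q')" using assms(2) by (rule Rloc_E)
  have "x * y = fps_of_poly (p * p') * inverse (fps_of_poly (q * q'))"
    by (simp add: a b fps_of_poly_mult fps_inverse_mult mult_ac)
  moreover have "poly (q * q') 0 \<noteq> 0" using a b by simp
  ultimately show ?thesis using inRloc by metis
qed

lemma Rloc_add: assumes "x \<in> Rloc" "y \<in> Rloc" shows "x + y \<in> (Rloc :: 'k::field fps set)"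
proof -
  obtain p q where a: "poly q 0 \<noteq> 0" "x = fps_of_poly p * inverse (fps_of_poly q)" using assms(1) by (rule Rloc_E)
  obtain p' q' where b: "poly q' 0 \<noteq> 0" "y = fps_of_poly p' * inverse (fps_of_poly q')" using assms(2) by (rule Rloc_E)
  have i1: "fps_of_poly q * inverse (fps_of_poly q) = 1" using fq0[OF a(1)] by (simp add: inverse_mult_eq_1')
  have i2: "fps_of_poly q' * inverse (fps_of_poly q') = 1" using fq0[OF b(1)] by (simp add: inverse_mult_eq_1')
  have e1: "fps_of_poly p * fps_of_poly q' * (inverse (fps_of_poly q) * inverse (fps_of_poly q')) = fps_of_poly p * inverse (fps_of_poly q) * (fps_of_poly q' * inverse (fps_of_poly q'))"
    by (simp only: mult_ac)
  have e2: "fps_of_poly p' * fps_of_poly q * (inverse (fps_of_poly q) * inverse (fps_of_poly q')) = fps_of_poly p' * inverse (fps_of_poly q') * (fps_of_poly q * inverse (fps_of_poly q))"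
    by (simp only: mult_ac)
  have "x + y = fps_of_poly (p * q' + p'*q) * inverse (fps_of_poly (q * q'))"
    unfolding fps_of_poly_mult fps_of_poly_add fps_inverse_mult distrib_right e1 e2 i1 i2 a b by simp
  moreover have "poly (q * q') 0 \<noteq> 0" using a b by simp
  ultimately show ?thesis using inRloc by metis
qed

lemma Rloc_const: "fps_const c \<in> (Rloc :: 'k::field fps set)"
  using poly_in_Rloc[of "[:c:]"] by (simp add: fps_of_poly_const)

lemma Rloc_uminus: "x \<in> Rloc \<Longrightarrow> - x \<in> (Rloc :: 'k::field fps set)"
  using Rloc_mult[OF Rloc_const[of "-1"]] by (simp add: fps_const_neg[symmetric])

lemma Rloc_diff: "x \<in> Rloc \<Longrightarrow> y \<in> Rloc \<Longrightarrow> x - y \<in> (Rloc :: 'k::field fps set)"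
  using Rloc_add[OF _ Rloc_uminus] by (metis diff_conv_add_uminus)

lemma Rloc_X: "fps_X \<in> (Rloc :: 'k::field fps set)"
  using poly_in_Rloc[of "[:0,1:]"] by simp

lemma Rloc_deriv: assumes "x \<in> Rloc" shows "fps_deriv x \<in> (Rloc :: 'k::field fps set)"
proof -
  obtain p q where a: "poly q 0 \<noteq> 0" "x = fps_of_poly p * inverse (fps_of_poly q)" using assms(1) by (rule Rloc_E)
  have "fps_deriv x = fps_of_poly (pderiv p) * inverse (fps_of_poly q) - fps_of_poly p * (fps_of_poly (pderiv q) * (inverse (fps_of_poly q) * inverse (fps_of_poly q)))"
    using a fq0[OF a(1)] by (simp add: fps_inverse_deriv fps_of_poly_pderiv power2_eq_square algebra_simps)
  then show ?thesis using a
    by (metis Rloc_diff Rloc_mult inv_in_Rloc poly_in_Rloc)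
qed

definition Z :: "nat \<Rightarrow> 'k::field fps \<Rightarrow> bool" where
  "Z n x \<longleftrightarrow> (\<forall>i<n. x $ i = 0)"

lemma Z_mult: assumes "Z m x" "Z n y" shows "Z (m+n) (x * y)"
  unfolding Z_def
proof (intro allI impI)
  fix i assume "i < m + n"
  have "(x * y) $ i = (\<Sum>j=0..i. x$j * y$(i - j))" by (rule fps_mult_nth)
  also have "\<dots> = 0"
  proof (rule sum.neutral, intro ballI)
    fix j assume "j \<in> {0..i}"
    show "x$j * y$(i-j) = 0"
    proof (cases "j < m")
      case True then show ?thesis using assms(1) by (simp add: Z_def)
    next
      case False then have "i - j < n" using \<open>i < m+n\<close> \<open>j \<in> {0..i}\<close> by auto
      then show ?thesis using assms(2) by (simp add: Z_def)
    qed
  qed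
  finally show "(x * y) $ i = 0" .
qed

lemma Z_deriv: "Z (Suc n) x \<Longrightarrow> Z n (fps_deriv x)"
  by (simp add: Z_def)

lemma Z_add: "Z n x \<Longrightarrow> Z n y \<Longrightarrow> Z n (x + y)" by (simp add: Z_def)
lemma Z_diff: "Z n x \<Longrightarrow> Z n y \<Longrightarrow> Z n (x - y)" by (simp add: Z_def)
lemma Z_uminus: "Z n x \<Longrightarrow> Z n (- x)" by (simp add: Z_def)
lemma Z_0: "Z 0 x" by (simp add: Z_def)
lemma Z_mono: "Z n x \<Longrightarrow> m \<le> n \<Longrightarrow> Z m x" by (simp add: Z_def)

lemma mpow_Z: "x \<in> mpow n \<Longrightarrow> Z n x"
  by (auto simp: mpow_def Z_def fps_X_power_mult_nth)

lemma mpow_Rloc: "x \<in> mpow n \<Longrightarrow> x \<in> Rloc"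
proof -
  assume "x \<in> mpow n"
  then obtain r where "r \<in> Rloc" "x = fps_X ^ n * r" by (auto simp: mpow_def)
  moreover have "fps_X ^ n \<in> (Rloc :: 'a fps set)"
    by (induction n) (auto intro: Rloc_mult Rloc_X simp: Rloc_const[of 1, simplified])
  ultimately show ?thesis using Rloc_mult by blast
qed

lemma mpowI: "r \<in> Rloc \<Longrightarrow> fps_X ^ n * r \<in> mpow n"
  by (auto simp: mpow_def)

lemma mpow_add: assumes "x \<in> mpow n" "y \<in> mpow n" shows "x + y \<in> mpow n"
proof -
  obtain r s where "r \<in> Rloc" "s \<in> Rloc" "x = fps_X ^ n * r" "y = fps_X ^ n * s" using assms by (auto simp: mpow_def)
  then show ?thesis using mpowI[OF Rloc_add, of r s n] by (simp add: distrib_left)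
qed

lemma mpow_uminus: assumes "x \<in> mpow n" shows "- x \<in> mpow n"
proof -
  obtain r where "r \<in> Rloc" "x = fps_X ^ n * r" using assms by (auto simp: mpow_def)
  then show ?thesis using mpowI[OF Rloc_uminus, of r n] by simp
qed

lemma mpow_diff: "x \<in> mpow n \<Longrightarrow> y \<in> mpow n \<Longrightarrow> x - y \<in> mpow n"
  using mpow_add[OF _ mpow_uminus] by (metis diff_conv_add_uminus)

lemma mpow_zero: "0 \<in> mpow n"
  using mpowI[OF Rloc_const[of 0]] by simp

lemma mpow_multR: assumes "x \<in> mpow n" "r \<in> Rloc" shows "x * r \<in> mpow n"
proof -
  obtain s where "s \<in> Rloc" "x = fps_X ^ n * s" using assms by (auto simp: mpow_def)
  then show ?thesis using mpowI[OF Rloc_mult[OF _ assms(2)], of s n] by (simp add: mult.assoc)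
qed

lemma X_div: assumes "x \<in> Rloc" "x $ 0 = 0" shows "\<exists>s\<in>Rloc. x = fps_X * s"
proof -
  obtain p q where a: "poly q 0 \<noteq> 0" "x = fps_of_poly p * inverse (fps_of_poly q)" using assms(1) by (rule Rloc_E)
  have i1: "inverse (fps_of_poly q) * fps_of_poly q = 1" using fq0[OF a(1)] by (simp add: inverse_mult_eq_1)
  have "fps_of_poly p = x * fps_of_poly q" using a(2) i1 by (simp add: mult.assoc)
  then have "coeff p 0 = 0" using assms(2) by (simp add: fps_eq_iff)
  obtain c p1 where p: "p = pCons c p1" by (cases p)
  with \<open>coeff p 0 = 0\<close> have "c = 0" by simp
  then have "x = fps_X * (fps_of_poly p1 * inverse (fps_of_poly q))"
    using a(2) p by (simp add: fps_of_poly_pCons mult_ac)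
  then show ?thesis using inRloc[OF a(1)] by blast
qed

lemma mpow_char: "x \<in> Rloc \<Longrightarrow> Z n x \<Longrightarrow> x \<in> mpow n"
proof (induction n arbitrary: x)
  case 0 then show ?case using mpowI[of x 0] by simp
next
  case (Suc n)
  then obtain s where s: "s \<in> Rloc" "x = fps_X * s" using X_div[of x] by (auto simp: Z_def)
  have "Z n s" using Suc.prems(2) unfolding Z_def s(2) by (auto simp: fps_X_mult_nth)
  then obtain r where "r \<in> Rloc" "s = fps_X ^ n * r" using Suc.IH[OF s(1)] by (auto simp: mpow_def)
  then show ?case using s(2) mpowI[of r "Suc n"] by (simp add: mult.assoc)
qed

definition fv :: "'k::field fps \<times> 'k fps \<Rightarrow> 'k" where
  "fv g = (case g of (a,b) \<Rightarrow> if a \<in> mpow 2 then - ((a * fps_deriv b) $ 2) else (b * fps_deriv a) $ 2)"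

definition Phi :: "('k::field fps \<times> 'k fps \<Rightarrow>\<^sub>0 int) \<Rightarrow> 'k" where
  "Phi x = Sum_any (\<lambda>g. of_int (Poly_Mapping.lookup x g) * fv g)"

lemma Phi_fin: "finite {g. of_int (Poly_Mapping.lookup x g) * (fv g :: 'k::field) \<noteq> 0}"
  by (rule finite_subset[OF _ Poly_Mapping.finite_keys[of x]]) (auto simp: in_keys_iff)

lemma Phi_add: "Phi (x + y) = Phi x + (Phi y :: 'k::field)"
  unfolding Phi_def Poly_Mapping.lookup_add of_int_add distrib_right
  by (rule Sum_any.distrib[OF Phi_fin Phi_fin])

lemma Phi_zero: "Phi 0 = (0 :: 'k::field)"
  by (simp add: Phi_def)

lemma Phi_uminus: "Phi (- x) = - (Phi x :: 'k::field)"
  using Phi_add[of x "-x"] by (simp add: Phi_zero add_eq_0_iff2)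

lemma Phi_diff: "Phi (x - y) = Phi x - (Phi y :: 'k::field)"
  using Phi_add[of x "-y"] by (simp add: Phi_uminus)

lemma Phi_frag: "Phi (frag_of p) = (fv p :: 'k::field)"
proof -
  have "(\<Sum>a. of_int (Poly_Mapping.lookup (frag_of p) a) * fv a) = (\<Sum>a. if a = p then fv p else (0::'k))"
    by (intro Sum_any.cong) (auto simp: lookup_single when_def)
  then show ?thesis by (simp add: Phi_def)
qed

lemma Z_nth: "Z n w \<Longrightarrow> i < n \<Longrightarrow> w $ i = 0" by (simp add: Z_def)

lemma key2: assumes "Z 2 a" "Z 2 y" shows "(a * fps_deriv y) $ 2 = 0"
proof -
  have "Z 1 (fps_deriv y)" using assms(2) Z_deriv[of 1 y] by (simp add: numeral_2_eq_2)
  then have "Z 3 (a * fps_deriv y)" using Z_mult[OF assms(1)] by fastforce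
  then show ?thesis by (rule Z_nth) simp
qed

lemma Z2: "x \<in> mpow 2 \<Longrightarrow> Z 2 x" by (rule mpow_Z)

lemma fv1: "a \<in> mpow 2 \<Longrightarrow> fv (a,b) = - ((a * fps_deriv b) $ 2)" by (simp add: fv_def)

lemma rel1: assumes "a \<in> mpow 2" "b \<in> Rloc" shows "fv (a,b) + fv (b,a) = 0"
proof (cases "b \<in> mpow 2")
  case True
  then show ?thesis using assms key2[OF Z2 Z2, of a b] key2[OF Z2 Z2, of b a] by (simp add: fv_def)
next
  case False
  then show ?thesis using assms by (simp add: fv_def mult.commute)
qed

lemma rel2a: assumes "a \<in> mpow 2" "b \<in> Rloc" "c \<in> Rloc"
  shows "fv (a,b) + fv (a,c) - fv (a, b + c - a * b * c) = 0"
proof -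
  have "Z 2 (a * (b * c))" using Z_mult[OF Z2[OF assms(1)] Z_0[of "b * c"]] by simp
  then have "Z 2 (a * b * c)" by (simp add: mult.assoc)
  then have "(a * fps_deriv (a * b * c)) $ 2 = 0" by (rule key2[OF Z2[OF assms(1)]])
  then show ?thesis using assms by (simp add: fv_def algebra_simps)
qed

lemma rel2b: assumes "a \<in> Rloc" "b \<in> mpow 2" "c \<in> mpow 2"
  shows "fv (a,b) + fv (a,c) - fv (a, b + c - a * b * c) = 0"
proof (cases "a \<in> mpow 2")
  case True
  have zb: "Z 2 (b + c - a * b * c)" using Z2[OF assms(2)] Z2[OF assms(3)] Z2[OF True]
    by (intro Z_diff Z_add) (auto intro: Z_mono[OF Z_mult[OF Z_mult]])
  show ?thesis using True key2[OF Z2[OF True] Z2[OF assms(2)]] key2[OF Z2[OF True] Z2[OF assms(3)]]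
      key2[OF Z2[OF True] zb] by (simp add: fv_def)
next
  case False
  have h4: "(0::nat)+2+2 = 4" by simp
  have "Z (0+2+2) (a * b * c)" using Z_mult[OF Z_mult[OF Z_0 Z2[OF assms(2)]] Z2[OF assms(3)]] .
  then have "Z 4 (a * b * c)" unfolding h4 .
  then have "Z (4+0) (a * b * c * fps_deriv a)" using Z_mult[OF _ Z_0[of "fps_deriv a"]] by blast
  then have "Z 4 (a * b * c * fps_deriv a)" by simp
  then have "(a * b * c * fps_deriv a) $ 2 = 0" by (rule Z_nth) simp
  then show ?thesis using False by (simp add: fv_def algebra_simps)
qed

lemma rel3: assumes "a \<in> mpow 2" "b \<in> Rloc" "c \<in> Rloc"
  shows "fv (a, b * c) - fv (a * b, c) - fv (a * c, b) = 0"
proof -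
  have "a * b \<in> mpow 2" "a * c \<in> mpow 2" using assms mpow_multR by auto
  moreover have "a * fps_deriv (b * c) = a * b*fps_deriv c + a * c*fps_deriv b" by (simp add: algebra_simps)
  ultimately show ?thesis using assms by (simp add: fv_def)
qed

lemma Phi_rels: "h \<in> DSrels \<Longrightarrow> Phi h = (0::'k::field)"
  unfolding DSrels_def
  by (auto simp: Phi_add Phi_diff Phi_frag rel1 rel2a rel2b rel3)

lemma DSrels_carrier: "DSrels \<subseteq> carrier (FK :: ('k::field fps \<times> 'k fps \<Rightarrow>\<^sub>0 int) monoid)"
proof
  fix h :: "'k fps \<times> 'k fps \<Rightarrow>\<^sub>0 int" assume "h \<in> DSrels"
  have K: "Poly_Mapping.keys (x + y) \<subseteq> S" "Poly_Mapping.keys (x - y) \<subseteq> S" if "Poly_Mapping.keys x \<subseteq> S" "Poly_Mapping.keys y \<subseteq> S" for x y :: "'k fps \<times> 'k fps \<Rightarrow>\<^sub>0 int" and S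
    using that Poly_Mapping.keys_add[of x y] keys_diff[of x y] by auto
  have RR: "b + c - a * b * c \<in> Rloc" if "a \<in> Rloc" "b \<in> Rloc" "c \<in> Rloc" for a b c :: "'k fps"
    using that by (intro Rloc_diff Rloc_add Rloc_mult)
  have MM: "b + c - a * b * c \<in> mpow 2" if "a \<in> Rloc" "b \<in> mpow 2" "c \<in> mpow 2" for a b c :: "'k fps"
  proof -
    have "a * b * c = b * (a * c)" by (simp add: mult_ac)
    then show ?thesis using that by (metis mpow_add mpow_diff mpow_multR mpow_Rloc Rloc_mult)
  qed
  from \<open>h \<in> DSrels\<close> show "h \<in> carrier FK"
    unfolding DSrels_def FK_def carrier_free_Abelian_group_iff
    apply (elim UnE CollectE exE conjE disjE)
    apply (simp_all only:)
    apply (intro K; simp add: DSgens_def mpow_Rloc; fail)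
    apply (intro K; simp add: DSgens_def mpow_Rloc RR mpow_Rloc; fail)
    apply (intro K; simp add: DSgens_def mpow_Rloc MM; fail)
    apply (intro K; simp add: DSgens_def mpow_Rloc mpow_multR Rloc_mult; fail)
    done
qed

lemma Phi_gen: "h \<in> generate FK DSrels \<Longrightarrow> Phi h = (0::'k::field)"
proof (induction rule: generate.induct)
  case one then show ?case by (simp add: FK_def Phi_zero)
next
  case (incl h) then show ?case by (rule Phi_rels)
next
  case (inv h)
  then have "h \<in> carrier FK" using DSrels_carrier by blast
  then have "Poly_Mapping.keys h \<subseteq> DSgens" by (simp add: FK_def)
  then show ?case using inv Phi_rels by (simp add: FK_def Phi_uminus)
next
  case (eng h1 h2) then show ?case by (simp add: FK_def Phi_add)
qed

abbreviation HH :: "('k::field fps \<times> 'k fps \<Rightarrow>\<^sub>0 int) set" where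
  "HH \<equiv> generate FK DSrels"

lemma HH0: "0 \<in> HH"
  using generate.one[of FK DSrels] by (simp add: FK_def)

lemma HHadd: "h1 \<in> HH \<Longrightarrow> h2 \<in> HH \<Longrightarrow> h1 + h2 \<in> HH"
  using generate.eng[of h1 FK DSrels h2] by (simp add: FK_def)

lemma FK_coset: "H #>\<^bsub>FK\<^esub> x = {h + x | h. h \<in> H}"
  by (auto simp: r_coset_def FK_def)

lemma FK_mul[simp]: "x \<otimes>\<^bsub>FK\<^esub> y = x + y" by (simp add: FK_def)

lemma FK_mult: fixes x y :: "'k::field fps \<times> 'k fps \<Rightarrow>\<^sub>0 int" shows "(HH #>\<^bsub>FK\<^esub> x) <#>\<^bsub>FK\<^esub> (HH #>\<^bsub>FK\<^esub> y) = HH #>\<^bsub>FK\<^esub> (x + y)"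
  unfolding FK_coset set_mult_def
  apply (auto simp: FK_mul HHadd add_ac)
  subgoal for h
  proof -
    assume "h \<in> HH"
    moreover have "h + (x + y) = (h + x) + (0 + y)" by (simp add: add_ac)
    ultimately show ?thesis using HH0 by blast
  qed
  done

definition rho :: "('k::field fps \<times> 'k fps \<Rightarrow>\<^sub>0 int) set \<Rightarrow> 'k fps set" where
  "rho C = omcls (fps_X ^ 2 * fps_const (Phi (SOME y. y \<in> C)))"

lemma rho_coset: "rho (HH #>\<^bsub>FK\<^esub> x) = omcls (fps_X ^ 2 * fps_const (Phi x))"
proof -
  have "x \<in> HH #>\<^bsub>FK\<^esub> x" using HH0 unfolding FK_coset by force
  then have "(SOME y. y \<in> HH #>\<^bsub>FK\<^esub> x) \<in> HH #>\<^bsub>FK\<^esub> x" by (rule someI)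
  then obtain h where "h \<in> HH" "(SOME y. y \<in> HH #>\<^bsub>FK\<^esub> x) = h + x" unfolding FK_coset by blast
  then show ?thesis unfolding rho_def by (simp add: Phi_add Phi_gen)
qed

lemma omcls_char: "omcls u = {h + u | h. h \<in> mpow 3}"
  by (auto simp: omcls_def r_coset_def OmG_def)

lemma omcls_mult: "omcls u \<otimes>\<^bsub>OmQ\<^esub> omcls v = omcls (u + v)"
  unfolding OmQ_def FactGroup_def omcls_char
  apply (simp add: set_mult_def OmG_def)
  apply (auto simp: add_ac)
   apply (metis add.assoc add.left_commute mpow_add)
  apply (metis add_0 mpow_zero add.assoc)
  done

lemma omcls_carrier: "u \<in> mpow 2 \<Longrightarrow> omcls u \<in> carrier OmQ"
  by (auto simp: OmQ_def FactGroup_def RCOSETS_def omcls_def OmG_def)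

lemma omcls_eq: fixes u v :: "'k::field fps" assumes "u - v \<in> mpow 3" shows "omcls u = omcls v"
  unfolding omcls_char
proof (auto)
  fix h :: "'k fps" assume "h \<in> mpow 3"
  then show "\<exists>h'. h + u = h' + v \<and> h' \<in> mpow 3"
    using assms by (intro exI[of _ "h + (u - v)"]) (auto simp: mpow_add)
next
  fix h :: "'k fps" assume "h \<in> mpow 3"
  then show "\<exists>h'. h + v = h' + u \<and> h' \<in> mpow 3"
    using assms by (intro exI[of _ "h - (u - v)"]) (auto simp: mpow_diff)
qed

lemma X2_Rloc: "fps_X ^ 2 * fps_const c \<in> (Rloc :: 'k::field fps set)"
  using mpow_Rloc[OF mpowI[OF Rloc_const]] .

lemma cls: assumes "w \<in> Rloc" "Z 2 w"
  shows "omcls (fps_X ^ 2 * fps_const (w $ 2)) = omcls w"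
proof (rule omcls_eq)
  have "Z 3 (fps_X ^ 2 * fps_const (w $ 2) - w)"
    using assms(2) unfolding Z_def by (auto simp: fps_X_power_mult_nth less_Suc_eq numeral_3_eq_3 numeral_2_eq_2)
  then show "fps_X ^ 2 * fps_const (w $ 2) - w \<in> mpow 3"
    using Rloc_diff[OF X2_Rloc assms(1)] mpow_char by blast
qed

lemma K2_carrier: "C \<in> carrier K2rel \<Longrightarrow> \<exists>x. C = HH #>\<^bsub>FK\<^esub> x"
  by (auto simp: K2rel_def FactGroup_def RCOSETS_def)

lemma X2c_mpow: "fps_X ^ 2 * fps_const c \<in> (mpow 2 :: 'k::field fps set)"
  by (rule mpowI[OF Rloc_const])

lemma rho_hom: "rho \<in> hom (K2rel :: ('k::field fps \<times> 'k fps \<Rightarrow>\<^sub>0 int) set monoid) OmQ"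
proof (rule homI)
  fix C :: "('k fps \<times> 'k fps \<Rightarrow>\<^sub>0 int) set" assume "C \<in> carrier K2rel"
  then obtain x where "C = HH #>\<^bsub>FK\<^esub> x" using K2_carrier by blast
  then show "rho C \<in> carrier OmQ" by (simp add: rho_coset omcls_carrier X2c_mpow)
next
  fix C D :: "('k fps \<times> 'k fps \<Rightarrow>\<^sub>0 int) set" assume "C \<in> carrier K2rel" "D \<in> carrier K2rel"
  then obtain x y where xy: "C = HH #>\<^bsub>FK\<^esub> x" "D = HH #>\<^bsub>FK\<^esub> y" using K2_carrier by blast
  have "C \<otimes>\<^bsub>K2rel\<^esub> D = HH #>\<^bsub>FK\<^esub> (x + y)"
    using FK_mult[of x y] by (simp add: xy K2rel_def FactGroup_def)
  then have "rho (C \<otimes>\<^bsub>K2rel\<^esub> D) = omcls (fps_X ^ 2 * fps_const (Phi x + Phi y))"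
    by (simp add: rho_coset Phi_add)
  also have "\<dots> = omcls (fps_X ^ 2 * fps_const (Phi x) + fps_X ^ 2 * fps_const (Phi y))"
    by (simp only: fps_const_add[symmetric] distrib_left)
  also have "\<dots> = rho C \<otimes>\<^bsub>OmQ\<^esub> rho D"
    by (simp only: xy rho_coset omcls_mult)
  finally show "rho (C \<otimes>\<^bsub>K2rel\<^esub> D) = rho C \<otimes>\<^bsub>OmQ\<^esub> rho D" .
qed

lemma rho_c2: fixes a b :: "'k::field fps" assumes ab: "a \<in> mpow 2" "b \<in> Rloc"
  shows "rho (DS a b) = omcls (- (a * dR b))"
proof -
  have w: "- (a * dR b) \<in> Rloc" using ab unfolding dR_def
    by (intro Rloc_uminus Rloc_mult[OF mpow_Rloc[OF ab(1)] Rloc_deriv[OF ab(2)]])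
  have "Z (2+0) (a * dR b)" by (rule Z_mult[OF Z2[OF ab(1)] Z_0])
  then have z: "Z 2 (- (a * dR b))" by (intro Z_uminus) simp
  have "rho (DS a b) = omcls (fps_X ^ 2 * fps_const ((- (a * dR b)) $ 2))"
    unfolding DS_def rho_coset Phi_frag fv1[OF ab(1)] by (simp add: dR_def)
  also have "\<dots> = omcls (- (a * dR b))" by (rule cls[OF w z])
  finally show ?thesis .
qed

lemma rho_c3: fixes a b :: "'k::field fps" assumes ab: "a \<in> Rloc" "b \<in> mpow 2"
  shows "rho (DS a b) = omcls (b * dR a)"
proof -
  have w: "b * dR a \<in> Rloc" using ab unfolding dR_def
    by (intro Rloc_mult[OF mpow_Rloc[OF ab(2)] Rloc_deriv[OF ab(1)]])
  have "Z (2+0) (b * dR a)" by (rule Z_mult[OF Z2[OF ab(2)] Z_0])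
  then have z: "Z 2 (b * dR a)" by simp
  have f: "fv (a, b) = (b * dR a) $ 2"
  proof (cases "a \<in> mpow 2")
    case True
    have "(a * fps_deriv b) $ 2 = 0" by (rule key2[OF Z2[OF True] Z2[OF ab(2)]])
    moreover have "(b * fps_deriv a) $ 2 = 0" by (rule key2[OF Z2[OF ab(2)] Z2[OF True]])
    ultimately show ?thesis using True by (simp add: fv_def dR_def)
  next
    case False then show ?thesis by (simp add: fv_def dR_def)
  qed
  have "rho (DS a b) = omcls (fps_X ^ 2 * fps_const ((b * dR a) $ 2))"
    unfolding DS_def rho_coset Phi_frag f ..
  also have "\<dots> = omcls (b * dR a)" by (rule cls[OF w z])
  finally show ?thesis .
qed

theorem proposition2p3:
  fixes k_type :: "'k::field itself"
  assumes "(2::'k) \<noteq> 0"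
  shows "\<exists>\<rho>. \<rho> \<in> hom (K2rel :: ('k fps \<times> 'k fps \<Rightarrow>\<^sub>0 int) set monoid) OmQ
          \<and> (\<forall>a b. a \<in> mpow 2 \<and> b \<in> Rloc \<longrightarrow> \<rho> (DS a b) = omcls (- (a * dR b)))
          \<and> (\<forall>a b. a \<in> Rloc \<and> b \<in> mpow 2 \<longrightarrow> \<rho> (DS a b) = omcls (b * dR a))
          \<and> \<rho> (DS (fps_X ^ 2) fps_X) = omcls (- (fps_X ^ 2 * dR fps_X))
          \<and> omcls (- (fps_X ^ 2 * dR (fps_X :: 'k fps))) = omcls (- (fps_X ^ 2))
          \<and> omcls (- (fps_X ^ 2 :: 'k fps)) \<noteq> \<one>\<^bsub>OmQ\<^esub>"
proof (intro exI[of _ rho] conjI allI impI)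
  show "rho \<in> hom (K2rel :: ('k fps \<times> 'k fps \<Rightarrow>\<^sub>0 int) set monoid) OmQ" by (rule rho_hom)
next
  fix a b :: "'k fps" assume ab: "a \<in> mpow 2 \<and> b \<in> Rloc"
  then show "rho (DS a b) = omcls (- (a * dR b))" using rho_c2 by blast
next
  fix a b :: "'k fps" assume ab: "a \<in> Rloc \<and> b \<in> mpow 2"
  then show "rho (DS a b) = omcls (b * dR a)" using rho_c3 by blast
next
  have "fps_X ^ 2 \<in> (mpow 2 :: 'k fps set)" using X2c_mpow[of 1] by simp
  then show "rho (DS (fps_X ^ 2) fps_X) = omcls (- (fps_X ^ 2 * dR (fps_X :: 'k fps)))"
    by (rule rho_c2[OF _ Rloc_X])
next
  show "omcls (- (fps_X ^ 2 * dR (fps_X :: 'k fps))) = omcls (- (fps_X ^ 2))"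
    by (simp add: dR_def)
next
  show "omcls (- (fps_X ^ 2 :: 'k fps)) \<noteq> \<one>\<^bsub>OmQ\<^esub>"
  proof
    assume "omcls (- (fps_X ^ 2 :: 'k fps)) = \<one>\<^bsub>OmQ\<^esub>"
    then have e: "omcls (- (fps_X ^ 2 :: 'k fps)) = mpow 3" by (simp add: OmQ_def FactGroup_def)
    have "0 + - (fps_X ^ 2 :: 'k fps) \<in> omcls (- (fps_X ^ 2))"
      unfolding omcls_char using mpow_zero by blast
    then have "- (fps_X ^ 2 :: 'k fps) \<in> mpow 3" using e by simp
    then have "Z 3 (- (fps_X ^ 2 :: 'k fps))" by (rule mpow_Z)
    then have "(- (fps_X ^ 2 :: 'k fps)) $ 2 = 0" by (rule Z_nth) simp
    then show False by simp
  qed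
qed

end
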